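(* Let $w,v\in\mathbb{C}$ and put $\tilde p(z)=w(1-e^z)+z$. As real $n\to\infty$, \begin{align*} S_n(w;v)&=(n+v)\int_{-2}^{0}e^{n\tilde p(z)}e^{vz}\,dz+O\!\left(e^{-n/2}\right)\qquad(\mathrm{Re}(w)\leq1),\\ T_n(w;v)&=(n+v)\int_{0}^{2}e^{n\tilde p(z)}e^{vz}\,dz+O\!\left(e^{-n/2}\right)\qquad(\mathrm{Re}(w)\geq1), \end{align*} with implied constants depending only on $w$ and $v$.
   Context: Principal logarithm branch (arguments in $(-\pi,\pi]$); $(nw)^{-(n+v)}=e^{-(n+v)\log n}e^{-(n+v)\log w}$, $z^{n+v}=e^{(n+v)\log z}$ for $z>0$. For real $n>0$ with $\mathrm{Re}(n+v)>-1$: $S_n(w;v)=1+nw\int_0^1 e^{nw(1-z)}z^{n+v}\,dz$ and, for $w\neq0$, $T_n(w;v)=e^{nw}(nw)^{-(n+v)}\Gamma(n+v+1)-S_n(w;v)$. *)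

theory Defs
  imports "HOL-Analysis.Analysis"
begin

text \<open>Principal branch: z^(n+v) = exp((n+v) ln z) for real z > 0 (the value at z = 0 is
  irrelevant for the integral). Meaningful for real n > 0 with Re(n+v) > -1.\<close>
definition S_fun :: "real \<Rightarrow> complex \<Rightarrow> complex \<Rightarrow> complex" where
  "S_fun n w v = 1 + of_real n * w *
     integral {0..1} (\<lambda>z::real. exp (of_real n * w * of_real (1 - z)) *
                                 exp ((of_real n + v) * of_real (ln z)))"

text \<open>(nw)^{-(n+v)} = exp(-(n+v) log n) exp(-(n+v) Log w), principal Log (Ln); w \<noteq> 0.\<close>
definition T_fun :: "real \<Rightarrow> complex \<Rightarrow> complex \<Rightarrow> complex" where
  "T_fun n w v = exp (of_real n * w) * exp (- (of_real n + v) * of_real (ln n))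
                 * exp (- (of_real n + v) * Ln w) * Gamma (of_real n + v + 1) - S_fun n w v"

definition ptilde :: "complex \<Rightarrow> complex \<Rightarrow> complex" where
  "ptilde w z = w * (1 - exp z) + z"

end

theory Submission
  imports Defs "HOL-Complex_Analysis.Complex_Analysis"
begin

definition fz :: "real \<Rightarrow> complex \<Rightarrow> complex \<Rightarrow> real \<Rightarrow> complex" where
  "fz n w v t = exp (of_real n * w * of_real (1 - t)) * (of_real t powr (of_real n + v))"

definition gz :: "real \<Rightarrow> complex \<Rightarrow> complex \<Rightarrow> real \<Rightarrow> complex" where
  "gz n w v z = exp (of_real n * ptilde w (of_real z)) * exp (v * of_real z)"

lemma gz_eq: "gz n w v z = fz n w v (exp z)"
proof -
  have "of_real (exp z) powr (of_real n + v) = exp ((of_real n + v) * of_real z)"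
    by (simp add: powr_def Ln_of_real)
  then show ?thesis
    unfolding gz_def fz_def ptilde_def
    by (simp add: exp_add[symmetric] algebra_simps exp_of_real)
qed

lemma gz_0 [simp]: "gz n w v 0 = 1"
  by (simp add: gz_def ptilde_def)

lemma gz_deriv:
  "(gz n w v has_vector_derivative ((of_real n + v - of_real n * w * exp (of_real z)) * gz n w v z)) (at z within S)"
proof -
  have e: "gz n w v = (\<lambda>z. exp (of_real n * (w * (1 - exp (of_real z)) + of_real z) + v * of_real z))"
    by (auto simp: gz_def ptilde_def exp_add fun_eq_iff)
  have "((\<lambda>\<zeta>. exp (of_real n * (w * (1 - exp \<zeta>) + \<zeta>) + v * \<zeta>)) has_field_derivative
          ((of_real n + v - of_real n * w * exp (of_real z)) * gz n w v z)) (at (of_real z))"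
    by (rule derivative_eq_intros refl)+ (simp add: e algebra_simps)
  from has_vector_derivative_real_field[OF this] show ?thesis unfolding e .
qed

lemma fz_cont: "S \<subseteq> {0..} \<Longrightarrow> Re (of_real n + v) > 0 \<Longrightarrow> continuous_on S (fz n w v)"
  unfolding fz_def
  by (intro continuous_intros continuous_on_powr_complex) auto

lemma gz_cont: "continuous_on S (gz n w v)"
  unfolding gz_def ptilde_def by (intro continuous_intros)

lemma ftc_subst:
  assumes "x \<le> y" "Re (of_real n + v) > 0"
  shows "(of_real n + v) * integral {x..y} (gz n w v) =
         of_real n * w * integral {exp x..exp y} (fz n w v) + gz n w v y - gz n w v x"
proof -
  define a where "a = of_real n + v"
  define I where "I = integral {exp x..exp y} (fz n w v)"
  have sub: "((\<lambda>z. exp z *\<^sub>R fz n w v (exp z)) has_integral I) {x..y}"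
    unfolding I_def
    by (rule has_integral_substitution[where c="exp x" and d="exp y"])
       (use assms in \<open>auto intro!: fz_cont derivative_eq_intros order_trans[OF less_imp_le[OF exp_gt_zero]]\<close>)
  have ftc: "((\<lambda>z. (a - of_real n * w * exp (of_real z)) * gz n w v z) has_integral (gz n w v y - gz n w v x)) {x..y}"
    unfolding a_def by (rule fundamental_theorem_of_calculus[OF assms(1)]) (rule gz_deriv)
  have "((\<lambda>z. (a - of_real n * w * exp (of_real z)) * gz n w v z + of_real n * w * (exp z *\<^sub>R fz n w v (exp z)))
        has_integral (gz n w v y - gz n w v x + of_real n * w * I)) {x..y}"
    by (intro has_integral_add ftc has_integral_mult_right sub)
  moreover have "(\<lambda>z. (a - of_real n * w * exp (of_real z)) * gz n w v z + of_real n * w * (exp z *\<^sub>R fz n w v (exp z)))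
     = (\<lambda>z. a * gz n w v z)"
    by (auto simp: fun_eq_iff gz_eq[symmetric] scaleR_conv_of_real algebra_simps exp_of_real)
  ultimately have "((\<lambda>z. a * gz n w v z) has_integral (gz n w v y - gz n w v x + of_real n * w * I)) {x..y}" by simp
  moreover have "((\<lambda>z. a * gz n w v z) has_integral (a * integral {x..y} (gz n w v))) {x..y}"
    by (intro has_integral_mult_right integrable_integral integrable_continuous_interval gz_cont)
  ultimately show ?thesis unfolding a_def[symmetric] I_def[symmetric]
    by (metis has_integral_unique add.commute add_diff_eq)
qed


lemma n_le_exp: "(n::real) \<ge> 0 \<Longrightarrow> n * exp (- n) \<le> 2 * exp (- n / 2)"
proof -
  assume n: "n \<ge> 0"
  have "n / 2 \<le> exp (n / 2)" using exp_ge_add_one_self[of "n/2"] by linarith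
  hence "n \<le> 2 * exp (n / 2)" by linarith
  hence "n * exp (- n) \<le> 2 * exp (n / 2) * exp (- n)" by (intro mult_right_mono) auto
  also have "\<dots> = 2 * exp (- n / 2)" by (simp add: mult.assoc exp_add[symmetric])
  finally show ?thesis .
qed

lemma norm_fz: "t \<ge> 0 \<Longrightarrow> norm (fz n w v t) = exp (n * (1 - t) * Re w) * t powr (n + Re v)"
  unfolding fz_def by (simp add: norm_mult norm_powr_complex)

lemma norm_gz: "norm (gz n w v z) = exp (n * (Re w * (1 - exp z) + z) + Re v * z)"
  unfolding gz_def ptilde_def by (simp add: norm_mult exp_add[symmetric] exp_of_real del: of_real_exp)

lemma S_eq1:
  assumes "Re (of_real n + v) > 0"
  shows "S_fun n w v = 1 + of_real n * w * integral {0..1} (fz n w v)"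
proof -
  have "integral {0..1} (\<lambda>z::real. exp (of_real n * w * of_real (1 - z)) *
                                 exp ((of_real n + v) * of_real (ln z))) = integral {0..1} (fz n w v)"
    by (rule integral_spike[of "{0}"]) (auto simp: fz_def powr_def Ln_of_real)
  thus ?thesis unfolding S_fun_def by simp
qed

lemma S_eq:
  assumes "Re (of_real n + v) > 0"
  shows "S_fun n w v = of_real n * w * integral {0..exp (-2)} (fz n w v)
          + (of_real n + v) * integral {-2..0} (gz n w v) + gz n w v (-2)"
proof -
  have e1: "integral {0..1} (fz n w v) = integral {0..exp (-2)} (fz n w v) + integral {exp (-2)..1} (fz n w v)"
    by (rule sym, rule Henstock_Kurzweil_Integration.integral_combine) (use assms in \<open>auto intro!: integrable_continuous_interval fz_cont\<close>)
  have e2: "(of_real n + v) * integral {-2..0} (gz n w v) =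
         of_real n * w * integral {exp (-2)..1} (fz n w v) + 1 - gz n w v (-2)"
    using ftc_subst[of "-2" 0 n v w] assms by simp
  show ?thesis unfolding S_eq1[OF assms] e1 e2 by (simp add: algebra_simps)
qed

lemma S_bound:
  assumes n: "n > 0" and a: "n + Re v > 0" and w: "Re w \<le> 1"
  shows "norm (S_fun n w v - (of_real n + v) * integral {-2..0} (gz n w v))
         \<le> (2 * norm w + 1) * exp (- 2 * Re v) * exp (- n / 2)"
proof -
  have a': "Re (of_real n + v) > 0" using a by simp
  define \<delta> where "\<delta> = exp (-2::real)"
  have \<delta>: "0 < \<delta>" "\<delta> \<le> 1" by (auto simp: \<delta>_def)
  have fb: "norm (fz n w v t) \<le> exp (- n - 2 * Re v)" if t: "t \<in> {0..\<delta>}" for t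
  proof -
    have "n * (1 - t) * Re w \<le> n * (1 - t) * 1"
      using t \<delta> n w by (intro mult_left_mono) auto
    also have "\<dots> \<le> n" using t n by (auto simp: algebra_simps)
    finally have e1: "exp (n * (1 - t) * Re w) \<le> exp n" by simp
    have "t powr (n + Re v) \<le> \<delta> powr (n + Re v)"
      using t a by (intro powr_mono2) auto
    also have "\<dots> = exp (-2 * (n + Re v))" by (simp add: \<delta>_def powr_def)
    finally have e2: "t powr (n + Re v) \<le> exp (-2 * (n + Re v))" .
    have "norm (fz n w v t) = exp (n * (1 - t) * Re w) * t powr (n + Re v)"
      using t by (intro norm_fz) auto
    also have "\<dots> \<le> exp n * exp (-2 * (n + Re v))"
      by (rule mult_mono[OF e1 e2]) auto
    also have "\<dots> = exp (- n - 2 * Re v)" by (simp add: exp_add[symmetric] algebra_simps)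
    finally show ?thesis .
  qed
  have "norm (integral {0..\<delta>} (fz n w v)) \<le> exp (- n - 2 * Re v) * (\<delta> - 0)"
    by (rule integral_bound) (use \<delta> fb a' in \<open>auto intro!: fz_cont\<close>)
  also have "\<dots> \<le> exp (- n - 2 * Re v)" using \<delta> by (simp add: mult_left_le)
  finally have I: "norm (integral {0..\<delta>} (fz n w v)) \<le> exp (- n) * exp (- 2 * Re v)"
    by (simp add: exp_add[symmetric] algebra_simps)
  have "norm (of_real n * w * integral {0..\<delta>} (fz n w v)) \<le> n * norm w * (exp (- n) * exp (- 2 * Re v))"
    using n I by (simp add: norm_mult mult_left_mono)
  also have "\<dots> = norm w * exp (- 2 * Re v) * (n * exp (- n))" by (simp add: algebra_simps)
  also have "\<dots> \<le> norm w * exp (- 2 * Re v) * (2 * exp (- n / 2))"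
    using n by (intro mult_left_mono n_le_exp) auto
  finally have P1: "norm (of_real n * w * integral {0..\<delta>} (fz n w v)) \<le> 2 * norm w * exp (- 2 * Re v) * exp (- n / 2)"
    by (simp add: algebra_simps)
  have "n * (Re w * (1 - exp (-2)) + -2) \<le> n * (1 * (1 - exp (-2)) + -2)"
    using n w by (intro mult_left_mono add_right_mono mult_right_mono) auto
  also have "\<dots> \<le> - n / 2"
  proof -
    have "0 \<le> n * exp (-2)" using n by simp
    moreover have "n * (1 * (1 - exp (-2)) + -2) = - n - n * exp (-2)" by (simp add: algebra_simps)
    ultimately show ?thesis using n by linarith
  qed
  finally have "norm (gz n w v (-2)) \<le> exp (- n / 2 + Re v * (-2))"
    by (subst norm_gz) simp
  hence P2: "norm (gz n w v (-2)) \<le> exp (- 2 * Re v) * exp (- n / 2)"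
    by (simp add: exp_add[symmetric] algebra_simps)
  have "S_fun n w v - (of_real n + v) * integral {-2..0} (gz n w v) =
        of_real n * w * integral {0..\<delta>} (fz n w v) + gz n w v (-2)"
    using S_eq[OF a'] by (simp add: \<delta>_def)
  also have "norm \<dots> \<le> 2 * norm w * exp (- 2 * Re v) * exp (- n / 2) + exp (- 2 * Re v) * exp (- n / 2)"
    by (rule order_trans[OF norm_triangle_ineq add_mono[OF P1 P2]])
  also have "\<dots> = (2 * norm w + 1) * exp (- 2 * Re v) * exp (- n / 2)" by (simp add: algebra_simps)
  finally show ?thesis .
qed


lemma T_eq:
  assumes "Re (of_real n + v) > 0"
  shows "T_fun n w v - (of_real n + v) * integral {0..2} (gz n w v) =
    exp (of_real n * w) * exp (- (of_real n + v) * of_real (ln n)) * exp (- (of_real n + v) * Ln w)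
      * Gamma (of_real n + v + 1) - of_real n * w * integral {0..exp 2} (fz n w v) - gz n w v 2"
proof -
  have e1: "integral {0..exp 2} (fz n w v) = integral {0..1} (fz n w v) + integral {1..exp 2} (fz n w v)"
    by (rule sym, rule Henstock_Kurzweil_Integration.integral_combine) (use assms in \<open>auto intro!: integrable_continuous_interval fz_cont\<close>)
  have e2: "(of_real n + v) * integral {0..2} (gz n w v) =
         of_real n * w * integral {1..exp 2} (fz n w v) + gz n w v 2 - 1"
    using ftc_subst[of 0 2 n v w] assms by simp
  show ?thesis unfolding T_fun_def S_eq1[OF assms] e1 e2 by (simp add: algebra_simps)
qed

lemma tail_pt:
  fixes R t \<alpha> :: real
  assumes R: "R > 0" and \<alpha>: "0 \<le> \<alpha>" "2 * \<alpha> \<le> R" and t: "R \<le> t"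
  shows "t powr \<alpha> / exp t \<le> R powr \<alpha> * exp (- R) * exp (R / 2) * exp (- (1/2) * t)"
proof -
  have tp: "t > 0" using R t by simp
  have "ln (t / R) \<le> t / R - 1" using tp R by (intro ln_le_minus_one) auto
  hence l: "ln t - ln R \<le> (t - R) / R" using tp R by (simp add: ln_div diff_divide_distrib)
  have "\<alpha> * (ln t - ln R) \<le> \<alpha> * ((t - R) / R)" using l \<alpha> by (intro mult_left_mono) auto
  also have "\<dots> = (\<alpha> / R) * (t - R)" by simp
  also have "\<dots> \<le> (1/2) * (t - R)" using \<alpha> R t by (intro mult_right_mono) (auto simp: field_simps)
  finally have key: "\<alpha> * ln t - t \<le> \<alpha> * ln R - R + R / 2 - (1/2) * t" by (simp add: algebra_simps)
  have "t powr \<alpha> / exp t = exp (\<alpha> * ln t - t)" using tp by (simp add: powr_def exp_diff)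
  also have "\<dots> \<le> exp (\<alpha> * ln R - R + R / 2 - (1/2) * t)" using key by simp
  also have "\<dots> = R powr \<alpha> * exp (- R) * exp (R / 2) * exp (- (1/2) * t)"
    using R by (simp add: powr_def mult_exp_exp algebra_simps)
  finally show ?thesis .
qed

lemma gamma_tail:
  fixes a :: complex and R :: real
  assumes a: "Re a \<ge> 0" and R: "R > 0" "2 * Re a \<le> R"
    and I1: "((\<lambda>t. of_real t powr a / of_real (exp t)) has_integral I1) {0..R}"
  shows "norm (Gamma (a + 1) - I1) \<le> 2 * (R powr Re a * exp (- R))"
proof -
  define G where "G = (\<lambda>t::real. of_real t powr a / of_real (exp t) :: complex)"
  have gam: "(G has_integral Gamma (a + 1)) {0..}"
    using Gamma_integral_complex[of "a + 1"] a unfolding G_def by simp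
  have "((\<lambda>x. if x \<in> {0..R} then G x else 0) has_integral I1) {0..}"
    using I1 R by (subst has_integral_restrict) (auto simp: G_def)
  from has_integral_diff[OF gam this]
  have "((\<lambda>x. if x \<in> {R<..} then G x else 0) has_integral (Gamma (a + 1) - I1)) {0..}"
    by (rule has_integral_eq[rotated]) (use R in auto)
  hence tailI: "(G has_integral (Gamma (a + 1) - I1)) {R<..}"
    using R by (subst (asm) has_integral_restrict) auto
  define B where "B = (\<lambda>t. R powr Re a * exp (- R) * exp (R / 2) * exp (- (1/2) * t))"
  have Bint: "(B has_integral (R powr Re a * exp (- R) * exp (R / 2) * (exp (- (1/2) * R) / (1/2)))) {R..}"
    unfolding B_def by (intro has_integral_mult_right has_integral_exp_minus_to_infinity) auto
  have Bint': "(B has_integral (R powr Re a * exp (- R) * exp (R / 2) * (exp (- (1/2) * R) / (1/2)))) {R<..}"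
    by (rule has_integral_spike_set_eq[THEN iffD1, OF _ _ Bint]) (auto intro: negligible_subset[of "{R}"])
  have "norm (integral {R<..} G) \<le> integral {R<..} B"
  proof (rule integral_norm_bound_integral)
    show "G integrable_on {R<..}" using tailI by blast
    show "B integrable_on {R<..}" using Bint' by blast
    fix t assume t: "t \<in> {R<..}"
    have "norm (G t) = t powr Re a / exp t" using t R
      by (simp add: G_def norm_divide norm_powr_complex)
    also have "\<dots> \<le> B t" unfolding B_def using t R a by (intro tail_pt) auto
    finally show "norm (G t) \<le> B t" .
  qed
  also have "integral {R<..} B = 2 * (R powr Re a * exp (- R))"
    using integral_unique[OF Bint'] by (simp add: exp_add[symmetric] algebra_simps)
  finally show ?thesis using integral_unique[OF tailI] by simp
qed


lemma contour_main:
  fixes n :: real and w v :: complex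
  assumes n: "n > 0" and w: "Re w > 0" and a: "n + Re v > 0"
  shows "\<exists>I1 I2. ((\<lambda>t. of_real t powr (of_real n + v) / of_real (exp t)) has_integral I1) {0..n * norm w * exp 2}
     \<and> norm I2 \<le> norm (of_real n * w * of_real (exp 2) - of_real (n * norm w * exp 2))
          * ((n * norm w * exp 2) powr (n + Re v) * exp (\<bar>Im v\<bar> * pi) * exp (- (n * exp 2 * Re w)))
     \<and> of_real n * w * integral {0..exp 2} (fz n w v) =
       exp (of_real n * w) * exp (- (of_real n + v) * of_real (ln n)) * exp (- (of_real n + v) * Ln w) * (I1 + I2)"
proof -
  define a where "a = of_real n + v"
  define \<Delta> where "\<Delta> = exp (2::real)"
  define R where "R = n * norm w * \<Delta>"
  define P where "P = of_real n * w * of_real \<Delta>"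
  define K where "K = exp (of_real n * w) * exp (- a * of_real (ln n)) * exp (- a * Ln w)"
  define h where "h = (\<lambda>\<zeta>::complex. \<zeta> powr a * exp (- \<zeta>))"
  have Rea: "Re a = n + Re v" "Im a = Im v" by (auto simp: a_def)
  have wne: "w \<noteq> 0" using w by auto
  have \<Delta>pos: "\<Delta> > 0" by (simp add: \<Delta>_def)
  have Pn: "norm P = R" using n \<Delta>pos by (simp add: P_def R_def norm_mult)
  have ReP: "Re P = n * \<Delta> * Re w" by (simp add: P_def)
  have ReP0: "Re P > 0" using n w \<Delta>pos by (simp add: ReP)
  have Rpos: "R > 0" using n wne \<Delta>pos by (simp add: R_def)
  have RReP: "Re P \<le> R" using complex_Re_le_cmod[of P] Pn by simp
  have H: "convex hull {0, of_real R, P} \<subseteq> {\<zeta>. Re \<zeta> \<ge> 0}"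
    by (rule hull_minimal) (use ReP0 Rpos convex_halfspace_Re_ge[of 0] in auto)
  have cont: "continuous_on {\<zeta>. Re \<zeta> \<ge> 0} h"
    unfolding h_def
    by (intro continuous_intros continuous_on_powr_complex[of _ "\<lambda>z. z" "\<lambda>_. a"])
       (use a in \<open>auto simp: a_def\<close>)
  have diff: "h field_differentiable at x" if "x \<noteq> 0" "Re x \<ge> 0" for x
  proof -
    have "x \<notin> \<real>\<^sub>\<le>\<^sub>0" using that by (auto simp: complex_nonpos_Reals_iff complex_eq_iff)
    hence "((\<lambda>\<zeta>. \<zeta> powr a) has_field_derivative (a * x powr (a - 1))) (at x)"
      by (rule has_field_derivative_powr)
    moreover have "((\<lambda>\<zeta>. exp (- \<zeta>)) has_field_derivative (- exp (- x))) (at x)"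
      by (auto intro!: derivative_eq_intros)
    ultimately show ?thesis unfolding h_def field_differentiable_def
      by (intro exI) (rule DERIV_mult)
  qed
  have tri: "(h has_contour_integral 0) (linepath 0 (of_real R) +++ linepath (of_real R) P +++ linepath P 0)"
  proof (rule Cauchy_theorem_triangle_cofinite[of 0 "of_real R" P h "{0}"])
    show "continuous_on (convex hull {0, of_real R, P}) h" by (rule continuous_on_subset[OF cont H])
    show "finite {0::complex}" by simp
    fix x assume "x \<in> interior (convex hull {0, of_real R, P}) - {0}"
    hence "x \<noteq> 0" "Re x \<ge> 0" using H interior_subset by auto
    thus "h field_differentiable at x" by (rule diff)
  qed
  have seg: "continuous_on (closed_segment u v') h"
    if "closed_segment u v' \<subseteq> convex hull {0, of_real R, P}" for u v'
    using continuous_on_subset[OF cont order_trans[OF that H]] .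
  have c1: "continuous_on (closed_segment 0 (of_real R)) h"
    by (rule seg) (rule segments_subset_convex_hull)
  have c2: "continuous_on (closed_segment (of_real R) P) h"
    by (rule seg) (rule segments_subset_convex_hull)
  have c3: "continuous_on (closed_segment 0 P) h"
    by (rule seg) (rule segments_subset_convex_hull)
  have c3': "continuous_on (closed_segment P 0) h"
    using c3 by (simp add: closed_segment_commute)
  define I1 where "I1 = contour_integral (linepath 0 (of_real R)) h"
  define I2 where "I2 = contour_integral (linepath (of_real R) P) h"
  define J where "J = contour_integral (linepath 0 P) h"
  have h1: "(h has_contour_integral I1) (linepath 0 (of_real R))"
    unfolding I1_def by (rule has_contour_integral_integral contour_integrable_continuous_linepath c1)+
  have h2: "(h has_contour_integral I2) (linepath (of_real R) P)"
    unfolding I2_def by (rule has_contour_integral_integral contour_integrable_continuous_linepath c2)+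
  have h3: "(h has_contour_integral (- J)) (linepath P 0)"
    unfolding J_def contour_integral_reverse_linepath[OF c3', symmetric]
    by (rule has_contour_integral_integral contour_integrable_continuous_linepath c3')+
  have hJ: "(h has_contour_integral J) (linepath 0 P)"
    unfolding J_def by (rule has_contour_integral_integral contour_integrable_continuous_linepath c3)+
  have "(h has_contour_integral (I1 + (I2 + - J))) (linepath 0 (of_real R) +++ linepath (of_real R) P +++ linepath P 0)"
    by (intro has_contour_integral_join h1 h2 h3 valid_path_join valid_path_linepath) auto
  hence "I1 + (I2 + - J) = 0" by (rule has_contour_integral_unique[OF _ tri])
  hence JI: "J = I1 + I2" by (simp add: algebra_simps)
  have "((\<lambda>x. h (of_real x)) has_integral I1) {Re 0..Re (of_real R :: complex)}"
    using h1 Rpos by (subst has_contour_integral_linepath_Reals_iff[symmetric]) auto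
  moreover have "(\<lambda>x. h (of_real x)) = (\<lambda>t. of_real t powr a / of_real (exp t))"
    by (auto simp: h_def fun_eq_iff exp_minus divide_inverse exp_of_real)
  ultimately have I1r: "((\<lambda>t. of_real t powr a / of_real (exp t)) has_integral I1) {0..R}" by simp
  define B where "B = R powr (n + Re v) * exp (\<bar>Im v\<bar> * pi) * exp (- (n * \<Delta> * Re w))"
  have I2b: "norm I2 \<le> B * norm (P - of_real R)"
  proof (rule has_contour_integral_bound_linepath[OF h2])
    show "0 \<le> B" by (simp add: B_def)
    fix \<zeta> assume "\<zeta> \<in> closed_segment (of_real R) P"
    then obtain u where u: "0 \<le> u" "u \<le> 1" and z: "\<zeta> = (1 - u) *\<^sub>R of_real R + u *\<^sub>R P"
      by (auto simp: closed_segment_def)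
    have Rez: "Re \<zeta> \<ge> Re P"
    proof -
      have "Re \<zeta> = (1 - u) * R + u * Re P" by (simp add: z)
      also have "\<dots> \<ge> (1 - u) * Re P + u * Re P" using u RReP by (intro add_right_mono mult_left_mono) auto
      finally show ?thesis by (simp add: algebra_simps)
    qed
    have nz: "norm \<zeta> \<le> R"
    proof -
      have "norm \<zeta> \<le> norm ((1 - u) *\<^sub>R (of_real R :: complex)) + norm (u *\<^sub>R P)"
        unfolding z by (rule norm_triangle_ineq)
      also have "\<dots> = (1 - u) * R + u * R" using u Rpos Pn by simp
      finally show ?thesis by (simp add: algebra_simps)
    qed
    have "norm (h \<zeta>) = norm \<zeta> powr Re a * exp (- Im a * Arg \<zeta>) * exp (- Re \<zeta>)"
      by (simp add: h_def norm_mult norm_powr_complex)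
    also have "\<dots> \<le> R powr (n + Re v) * exp (\<bar>Im v\<bar> * pi) * exp (- (n * \<Delta> * Re w))"
    proof (intro mult_mono)
      show "norm \<zeta> powr Re a \<le> R powr (n + Re v)"
        using nz a Rea by (auto intro: powr_mono2)
      have "- Im a * Arg \<zeta> \<le> \<bar>Im v\<bar> * pi"
      proof -
        have "\<bar>Arg \<zeta>\<bar> \<le> pi" using mpi_less_Arg[of \<zeta>] Arg_le_pi[of \<zeta>] by linarith
        hence "\<bar>Im v\<bar> * \<bar>Arg \<zeta>\<bar> \<le> \<bar>Im v\<bar> * pi" by (intro mult_left_mono) auto
        moreover have "- Im a * Arg \<zeta> \<le> \<bar>Im v\<bar> * \<bar>Arg \<zeta>\<bar>"
          using Rea abs_mult[of "Im v" "Arg \<zeta>"] abs_ge_self[of "- Im v * Arg \<zeta>"] by simp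
        ultimately show ?thesis by linarith
      qed
      thus "exp (- Im a * Arg \<zeta>) \<le> exp (\<bar>Im v\<bar> * pi)" by simp
      show "exp (- Re \<zeta>) \<le> exp (- (n * \<Delta> * Re w))" using Rez ReP by simp
    qed auto
    finally show "norm (h \<zeta>) \<le> B" by (simp add: B_def)
  qed
  have sub: "((\<lambda>x. \<Delta> *\<^sub>R fz n w v (\<Delta> * x)) has_integral integral {0..\<Delta>} (fz n w v)) {0..1}"
  proof -
    have "continuous_on {0..\<Delta>} (fz n w v)" using a by (intro fz_cont) auto
    thus ?thesis
      using has_integral_substitution[of 0 1 "\<lambda>x. \<Delta> * x" 0 \<Delta> "fz n w v" "\<lambda>_. \<Delta>"] \<Delta>pos
      by (auto intro!: derivative_eq_intros)
  qed
  have hJ': "((\<lambda>x. K * (h (linepath 0 P x) * (P - 0))) has_integral K * J) {0..1}"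
    using hJ by (intro has_integral_mult_right) (simp add: has_contour_integral_linepath)
  have KP: "K * P powr a = exp (of_real n * w) * exp (2 * a)"
  proof -
    have "P = of_real (n * \<Delta>) * w" by (simp add: P_def algebra_simps)
    moreover have "Ln (of_real (n * \<Delta>) * w) = of_real (ln (n * \<Delta>)) + Ln w"
      using Ln_times_of_real[of "n * \<Delta>" w] Ln_of_real[of "n * \<Delta>"] n \<Delta>pos wne by simp
    ultimately have "Ln P = of_real (ln (n * \<Delta>)) + Ln w" by simp
    also have "ln (n * \<Delta>) = ln n + 2" using n by (simp add: \<Delta>_def ln_mult)
    finally have "Ln P = of_real (ln n) + 2 + Ln w" by simp
    moreover have "P \<noteq> 0" using ReP0 by auto
    ultimately show ?thesis unfolding K_def
      by (simp add: powr_def exp_add[symmetric] mult_exp_exp algebra_simps)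
  qed
  have eq: "K * (h (linepath 0 P x) * (P - 0)) = of_real n * w * (\<Delta> *\<^sub>R fz n w v (\<Delta> * x))"
    if x: "x \<in> {0..1}" for x
  proof -
    have lp: "linepath 0 P x = of_real x * P" by (simp add: linepath_def scaleR_conv_of_real)
    have p1: "(of_real x * P) powr a = of_real x powr a * P powr a"
      using x by (intro powr_times_real_left) auto
    have p2: "(of_real (\<Delta> * x) :: complex) powr a = exp (2 * a) * of_real x powr a"
    proof -
      have "(of_real (\<Delta> * x) :: complex) powr a = of_real \<Delta> powr a * of_real x powr a"
        using \<Delta>pos by (simp add: powr_times_real_left)
      also have "of_real \<Delta> powr a = exp (2 * a)" using \<Delta>pos by (simp add: powr_def Ln_of_real \<Delta>_def mult.commute)
      finally show ?thesis .
    qed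
    have p3: "exp (of_real n * w * of_real (1 - \<Delta> * x)) = exp (of_real n * w) * exp (- (of_real x * P))"
      by (simp add: P_def exp_add[symmetric] algebra_simps)
    have "K * (h (linepath 0 P x) * (P - 0)) = (K * P powr a) * of_real x powr a * exp (- (of_real x * P)) * P"
      unfolding lp h_def p1 by (simp add: algebra_simps)
    also have "\<dots> = of_real n * w * (\<Delta> *\<^sub>R fz n w v (\<Delta> * x))"
      unfolding KP fz_def p2[unfolded a_def] p3 by (simp add: scaleR_conv_of_real P_def a_def algebra_simps)
    finally show ?thesis .
  qed
  have "((\<lambda>x. of_real n * w * (\<Delta> *\<^sub>R fz n w v (\<Delta> * x))) has_integral K * J) {0..1}"
    by (rule has_integral_eq[OF eq hJ'])
  moreover have "((\<lambda>x. of_real n * w * (\<Delta> *\<^sub>R fz n w v (\<Delta> * x))) has_integral of_real n * w * integral {0..\<Delta>} (fz n w v)) {0..1}"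
    by (rule has_integral_mult_right[OF sub])
  ultimately have main: "of_real n * w * integral {0..\<Delta>} (fz n w v) = K * (I1 + I2)"
    using JI has_integral_unique by metis
  show ?thesis
    apply (rule exI[of _ I1], rule exI[of _ I2])
    using I1r I2b main
    by (simp add: a_def R_def \<Delta>_def B_def P_def K_def mult.commute)
qed


lemma exp2_ge: "exp (2::real) \<ge> 4"
proof -
  have "exp (1::real) \<ge> 2" using exp_ge_add_one_self[of 1] by simp
  hence "exp 1 * exp 1 \<ge> (2::real) * 2" by (intro mult_mono) auto
  thus ?thesis by (simp add: mult_exp_exp)
qed

lemma T_bound:
  assumes n: "n > \<bar>Re v\<bar>" and w: "Re w \<ge> 1"
  shows "norm (T_fun n w v - (of_real n + v) * integral {0..2} (gz n w v))
         \<le> (3 + 4 * norm w * exp 2) * exp (2 * Re v + 2 * \<bar>Im v\<bar> * pi) * exp (- n / 2)"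
proof -
  define \<Delta> where "\<Delta> = exp (2::real)"
  define \<alpha> where "\<alpha> = n + Re v"
  define R where "R = n * norm w * \<Delta>"
  define M where "M = exp (2 * Re v + 2 * \<bar>Im v\<bar> * pi)"
  define K where "K = exp (of_real n * w) * exp (- (of_real n + v) * of_real (ln n)) * exp (- (of_real n + v) * Ln w)"
  have npos: "n > 0" using n by linarith
  have apos: "\<alpha> > 0" using n by (simp add: \<alpha>_def)
  have \<Delta>4: "\<Delta> \<ge> 4" using exp2_ge by (simp add: \<Delta>_def)
  have nw: "norm w \<ge> 1" using w complex_Re_le_cmod[of w] by linarith
  have wne: "w \<noteq> 0" using nw by auto
  have Rpos: "R > 0" using npos nw \<Delta>4 unfolding R_def by (intro mult_pos_pos) auto
  have R2a: "2 * \<alpha> \<le> R"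
  proof -
    have "n * 1 * 4 \<le> n * norm w * \<Delta>" using npos nw \<Delta>4 by (intro mult_mono) auto
    thus ?thesis using n by (simp add: R_def \<alpha>_def)
  qed
  have ReRw: "n * Re w \<le> R"
  proof -
    have "n * Re w * 1 \<le> n * norm w * \<Delta>" using npos \<Delta>4 complex_Re_le_cmod[of w] w
      by (intro mult_mono) auto
    thus ?thesis by (simp add: R_def)
  qed
  have key: "n * Re w * (1 - \<Delta>) \<le> - 3 * n"
  proof -
    have "n * Re w * (1 - \<Delta>) \<le> n * 1 * (1 - \<Delta>)" using npos w \<Delta>4
      by (intro mult_right_mono_neg mult_left_mono) auto
    also have "\<dots> \<le> - 3 * n" using npos \<Delta>4 by (simp add: algebra_simps)
    finally show ?thesis .
  qed
  have lnR: "ln R = ln n + ln (norm w) + 2" using npos wne by (simp add: R_def \<Delta>_def ln_mult)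
  have RA: "R powr \<alpha> = exp (\<alpha> * (ln n + ln (norm w)) + 2 * \<alpha>)"
    using Rpos by (simp add: powr_def lnR algebra_simps)
  have Kb: "norm K \<le> exp (n * Re w - \<alpha> * (ln n + ln (norm w)) + \<bar>Im v\<bar> * pi)"
  proof -
    have "norm K = exp (n * Re w - \<alpha> * ln n - Re ((of_real n + v) * Ln w))"
      by (simp add: K_def norm_mult mult_exp_exp \<alpha>_def algebra_simps)
    also have "Re ((of_real n + v) * Ln w) = \<alpha> * ln (norm w) - Im v * Im (Ln w)"
      using wne by (simp add: \<alpha>_def)
    finally have e: "norm K = exp (n * Re w - \<alpha> * (ln n + ln (norm w)) + Im v * Im (Ln w))"
      by (simp add: algebra_simps)
    have b: "Im v * Im (Ln w) \<le> \<bar>Im v\<bar> * pi"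
    proof -
      have "\<bar>Im (Ln w)\<bar> \<le> pi" using mpi_less_Im_Ln[of w] Im_Ln_le_pi[of w] wne by auto
      hence "\<bar>Im v\<bar> * \<bar>Im (Ln w)\<bar> \<le> \<bar>Im v\<bar> * pi" by (intro mult_left_mono) auto
      moreover have "Im v * Im (Ln w) \<le> \<bar>Im v\<bar> * \<bar>Im (Ln w)\<bar>"
        using abs_mult[of "Im v" "Im (Ln w)"] abs_ge_self[of "Im v * Im (Ln w)"] by simp
      ultimately show ?thesis by linarith
    qed
    show ?thesis unfolding e using b by simp
  qed
  obtain I1 I2 where I1: "((\<lambda>t. of_real t powr (of_real n + v) / of_real (exp t)) has_integral I1) {0..R}"
    and I2: "norm I2 \<le> norm (of_real n * w * of_real \<Delta> - of_real R)
          * (R powr \<alpha> * exp (\<bar>Im v\<bar> * pi) * exp (- (n * \<Delta> * Re w)))"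
    and main: "of_real n * w * integral {0..\<Delta>} (fz n w v) = K * (I1 + I2)"
    using contour_main[of n w v] npos w apos unfolding R_def \<Delta>_def \<alpha>_def K_def by auto
  have tail: "norm (Gamma (of_real n + v + 1) - I1) \<le> 2 * (R powr \<alpha> * exp (- R))"
    using gamma_tail[of "of_real n + v" R I1] apos Rpos R2a I1 by (simp add: \<alpha>_def)
  have PR: "norm (of_real n * w * of_real \<Delta> - of_real R) \<le> 2 * R"
  proof -
    have "norm (of_real n * w * of_real \<Delta> - of_real R) \<le> norm (of_real n * w * of_real \<Delta>) + norm (of_real R :: complex)"
      by (rule norm_triangle_ineq4)
    also have "\<dots> = 2 * R" using npos Rpos \<Delta>4 by (simp add: R_def norm_mult)
    finally show ?thesis .
  qed
  have eq: "T_fun n w v - (of_real n + v) * integral {0..2} (gz n w v) =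
        K * (Gamma (of_real n + v + 1) - I1) - K * I2 - gz n w v 2"
    using T_eq[of n v w] apos main by (simp add: K_def \<Delta>_def \<alpha>_def algebra_simps)
  have B1: "norm (K * (Gamma (of_real n + v + 1) - I1)) \<le> 2 * M * exp (- n / 2)"
  proof -
    have "norm (K * (Gamma (of_real n + v + 1) - I1)) \<le>
          exp (n * Re w - \<alpha> * (ln n + ln (norm w)) + \<bar>Im v\<bar> * pi) * (2 * (R powr \<alpha> * exp (- R)))"
      unfolding norm_mult by (intro mult_mono Kb tail) auto
    also have "\<dots> = 2 * exp (n * Re w - R + 2 * \<alpha> + \<bar>Im v\<bar> * pi)"
      unfolding RA by (simp add: mult_exp_exp algebra_simps)
    also have "\<dots> \<le> 2 * exp (2 * Re v + 2 * \<bar>Im v\<bar> * pi + (- n / 2))"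
    proof -
      have "n * Re w - R \<le> n * Re w * (1 - \<Delta>)"
      proof -
        have "n * Re w * \<Delta> \<le> R" unfolding R_def using npos \<Delta>4 complex_Re_le_cmod[of w]
          by (intro mult_right_mono mult_left_mono) auto
        thus ?thesis by (simp add: algebra_simps)
      qed
      hence k2: "n * Re w - R \<le> - 3 * n" using key by linarith
      have "0 \<le> \<bar>Im v\<bar> * pi" by simp
      hence "n * Re w - R + 2 * \<alpha> + \<bar>Im v\<bar> * pi \<le> 2 * Re v + 2 * \<bar>Im v\<bar> * pi + (- n / 2)"
      proof -
        have "n * Re w - R + 2 * (n + Re v) + X \<le> 2 * Re v + 2 * X + (- n / 2)" if "0 \<le> X" for X :: real
          using that k2 npos by (simp add: field_simps)
        from this[of "\<bar>Im v\<bar> * pi"] show ?thesis by (simp add: \<alpha>_def mult.assoc)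
      qed
      thus ?thesis by simp
    qed
    finally show ?thesis by (simp add: M_def exp_add[symmetric] mult.assoc)
  qed
  have B2: "norm (K * I2) \<le> 4 * norm w * \<Delta> * M * exp (- n / 2)"
  proof -
    have "norm (K * I2) \<le> exp (n * Re w - \<alpha> * (ln n + ln (norm w)) + \<bar>Im v\<bar> * pi) *
          (2 * R * (R powr \<alpha> * exp (\<bar>Im v\<bar> * pi) * exp (- (n * \<Delta> * Re w))))"
      unfolding norm_mult
      by (intro mult_mono Kb order_trans[OF I2] mult_right_mono PR) auto
    also have "\<dots> = 2 * R * exp (n * Re w * (1 - \<Delta>) + 2 * \<alpha> + 2 * \<bar>Im v\<bar> * pi)"
      unfolding RA by (simp add: mult_exp_exp algebra_simps)
    also have "\<dots> \<le> 2 * R * exp (2 * Re v + 2 * \<bar>Im v\<bar> * pi + - n)"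
      using key Rpos by (intro mult_left_mono) (auto simp: \<alpha>_def)
    also have "\<dots> = 2 * norm w * \<Delta> * M * (n * exp (- n))"
      by (simp add: R_def M_def exp_add[symmetric] algebra_simps)
    also have "\<dots> \<le> 2 * norm w * \<Delta> * M * (2 * exp (- n / 2))"
      using npos \<Delta>4 by (intro mult_left_mono n_le_exp) (auto simp: M_def)
    finally show ?thesis by (simp add: algebra_simps)
  qed
  have B3: "norm (gz n w v 2) \<le> M * exp (- n / 2)"
  proof -
    have "norm (gz n w v 2) = exp (n * Re w * (1 - \<Delta>) + 2 * n + Re v * 2)"
      by (simp add: norm_gz \<Delta>_def algebra_simps)
    also have "\<dots> \<le> exp (2 * Re v + 2 * \<bar>Im v\<bar> * pi + - n / 2)"
    proof -
      have "0 \<le> \<bar>Im v\<bar> * pi" by simp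
      hence "n * Re w * (1 - \<Delta>) + 2 * n + Re v * 2 \<le> 2 * Re v + 2 * \<bar>Im v\<bar> * pi + - n / 2"
      proof -
        have "n * Re w * (1 - \<Delta>) + 2 * n + Re v * 2 \<le> 2 * Re v + 2 * X + - n / 2" if "0 \<le> X" for X :: real
          using that key npos by (simp add: field_simps)
        from this[of "\<bar>Im v\<bar> * pi"] show ?thesis by (simp add: mult.assoc)
      qed
      thus ?thesis by simp
    qed
    finally show ?thesis by (simp add: M_def exp_add[symmetric])
  qed
  have "norm (T_fun n w v - (of_real n + v) * integral {0..2} (gz n w v))
      \<le> norm (K * (Gamma (of_real n + v + 1) - I1)) + norm (K * I2) + norm (gz n w v 2)"
    unfolding eq by (rule order_trans[OF norm_triangle_ineq4 add_right_mono[OF norm_triangle_ineq4]])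
  also have "\<dots> \<le> 2 * M * exp (- n / 2) + 4 * norm w * \<Delta> * M * exp (- n / 2) + M * exp (- n / 2)"
    by (intro add_mono B1 B2 B3)
  also have "\<dots> = (3 + 4 * norm w * exp 2) * M * exp (- n / 2)"
    by (simp add: \<Delta>_def algebra_simps)
  finally show ?thesis by (simp add: M_def)
qed

theorem lemma6p1:
  fixes w v :: complex
  shows "(Re w \<le> 1 \<longrightarrow>
           (\<exists>C. \<forall>\<^sub>F n in at_top.
              cmod (S_fun n w v - (of_real n + v) *
                 integral {-2..0} (\<lambda>z::real. exp (of_real n * ptilde w (of_real z)) * exp (v * of_real z)))
              \<le> C * exp (- n / 2)))
       \<and> (Re w \<ge> 1 \<longrightarrow>
           (\<exists>C. \<forall>\<^sub>F n in at_top.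
              cmod (T_fun n w v - (of_real n + v) *
                 integral {0..2} (\<lambda>z::real. exp (of_real n * ptilde w (of_real z)) * exp (v * of_real z)))
              \<le> C * exp (- n / 2)))"
proof (intro conjI impI)
  have ev: "\<forall>\<^sub>F n in at_top. n > \<bar>Re v\<bar>" by (rule eventually_gt_at_top)
  assume w: "Re w \<le> 1"
  show "\<exists>C. \<forall>\<^sub>F n in at_top.
              cmod (S_fun n w v - (of_real n + v) *
                 integral {-2..0} (\<lambda>z::real. exp (of_real n * ptilde w (of_real z)) * exp (v * of_real z)))
              \<le> C * exp (- n / 2)"
  proof (intro exI[of _ "(2 * norm w + 1) * exp (- 2 * Re v)"] eventually_mono[OF ev])
    fix n :: real assume n: "n > \<bar>Re v\<bar>"
    show "cmod (S_fun n w v - (of_real n + v) *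
                 integral {-2..0} (\<lambda>z::real. exp (of_real n * ptilde w (of_real z)) * exp (v * of_real z)))
              \<le> (2 * norm w + 1) * exp (- 2 * Re v) * exp (- n / 2)"
      using S_bound[of n v w] n w unfolding gz_def by fastforce
  qed
next
  have ev: "\<forall>\<^sub>F n in at_top. n > \<bar>Re v\<bar>" by (rule eventually_gt_at_top)
  assume w: "Re w \<ge> 1"
  show "\<exists>C. \<forall>\<^sub>F n in at_top.
              cmod (T_fun n w v - (of_real n + v) *
                 integral {0..2} (\<lambda>z::real. exp (of_real n * ptilde w (of_real z)) * exp (v * of_real z)))
              \<le> C * exp (- n / 2)"
  proof (intro exI[of _ "(3 + 4 * norm w * exp 2) * exp (2 * Re v + 2 * \<bar>Im v\<bar> * pi)"] eventually_mono[OF ev])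
    fix n :: real assume n: "n > \<bar>Re v\<bar>"
    show "cmod (T_fun n w v - (of_real n + v) *
                 integral {0..2} (\<lambda>z::real. exp (of_real n * ptilde w (of_real z)) * exp (v * of_real z)))
              \<le> (3 + 4 * norm w * exp 2) * exp (2 * Re v + 2 * \<bar>Im v\<bar> * pi) * exp (- n / 2)"
      using T_bound[of v n w] n w unfolding gz_def by fastforce
  qed
qed

end
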